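(* Let $P$ be a classifier on $\mathbb{R}^n$ with infinite pointwise coverage. Then the label set $L_P$ has at most two elements.
   Context: A classifier is a partition $P$ of $\mathbb{R}^n$ together with a distinguished member $R \in P$, the refinement set, which may be empty and which is both meagre and Lebesgue null. The label set is $L_P = P \setminus \{R\}$ and the feature space is $\bigcup L_P$. For $x \in \mathbb{R}^n$, $P(x)$ denotes the member of $P$ containing $x$. An anchor for $x$ is an open ball $A = B(c,r)$ with $x \in A \subseteq P(x)$; its coverage is $r$. The coverage of $P$ at $x$ is $C_P(x) = \sup\{ r : B(c,r) \text{ is an anchor for } x\}$ ($0$ if no anchor exists, $\infty$ if anchors of arbitrarily large radius exist). $P$ has infinite pointwise coverage if $C_P(x) = \infty$ for every $x$ in the feature space. *)

theory Defs
  imports "HOL-Analysis.Analysis"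
begin

definition nowhere_dense :: "'a::topological_space set \<Rightarrow> bool" where
  "nowhere_dense S \<longleftrightarrow> interior (closure S) = {}"

definition meagre :: "'a::topological_space set \<Rightarrow> bool" where
  "meagre S \<longleftrightarrow> (\<exists>F. countable F \<and> (\<forall>N\<in>F. nowhere_dense N) \<and> S \<subseteq> \<Union>F)"

definition classifier :: "('a::euclidean_space) set set \<Rightarrow> 'a set \<Rightarrow> bool" where
  "classifier P R \<longleftrightarrow>
     \<Union>P = UNIV \<and>
     (\<forall>A\<in>P. \<forall>B\<in>P. A \<noteq> B \<longrightarrow> A \<inter> B = {}) \<and>
     (\<forall>A\<in>P. A \<noteq> R \<longrightarrow> A \<noteq> {}) \<and>
     R \<in> P \<and> meagre R \<and> R \<in> null_sets lebesgue"

definition label_set :: "'a set set \<Rightarrow> 'a set \<Rightarrow> 'a set set" where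
  "label_set P R = P - {R}"

definition feature_space :: "'a set set \<Rightarrow> 'a set \<Rightarrow> 'a set" where
  "feature_space P R = \<Union>(label_set P R)"

definition cell :: "'a set set \<Rightarrow> 'a \<Rightarrow> 'a set" where
  "cell P x = (THE A. A \<in> P \<and> x \<in> A)"

definition anchor :: "('a::metric_space) set set \<Rightarrow> 'a \<Rightarrow> 'a \<Rightarrow> real \<Rightarrow> bool" where
  "anchor P x c r \<longleftrightarrow> x \<in> ball c r \<and> ball c r \<subseteq> cell P x"

definition coverage :: "('a::metric_space) set set \<Rightarrow> 'a \<Rightarrow> ereal" where
  "coverage P x = (if \<exists>c r. anchor P x c r
                   then Sup {ereal r | c r. anchor P x c r} else 0)"

definition infinite_pointwise_coverage :: "('a::euclidean_space) set set \<Rightarrow> 'a set \<Rightarrow> bool" where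
  "infinite_pointwise_coverage P R \<longleftrightarrow> (\<forall>x\<in>feature_space P R. coverage P x = \<infinity>)"

end

theory Submission
  imports Defs
begin

lemma sq3: fixes a b c :: "'a::real_inner"
  shows "(dist a b)^2 + (dist b c)^2 + (dist a c)^2 \<le> 3*((norm a)^2+(norm b)^2+(norm c)^2)"
proof -
  have "0 \<le> inner (a+b+c) (a+b+c)" by simp
  thus ?thesis by (simp add: dist_norm power2_norm_eq_inner inner_simps inner_commute algebra_simps)
qed

lemma cell_eq:
  assumes "classifier P R" "A \<in> P" "x \<in> A"
  shows "cell P x = A"
proof -
  have "\<And>B. B \<in> P \<and> x \<in> B \<Longrightarrow> B = A"
    using assms unfolding classifier_def by blast
  then show ?thesis unfolding cell_def using assms(2,3) by (metis (no_types, lifting) the_equality)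
qed

lemma big_ball:
  fixes x :: "'a::real_normed_vector"
  assumes "coverage P x = \<infinity>" "\<rho> > 0"
  shows "\<exists>c. x \<in> ball c \<rho> \<and> ball c \<rho> \<subseteq> cell P x"
proof -
  have ex: "\<exists>c r. anchor P x c r"
    using assms(1) unfolding coverage_def by (auto split: if_splits)
  then have "Sup {ereal r | c r. anchor P x c r} = \<infinity>"
    using assms(1) unfolding coverage_def by simp
  then have "ereal \<rho> < Sup {ereal r | c r. anchor P x c r}" by simp
  then obtain c r where a: "anchor P x c r" and rr: "\<rho> < r"
    unfolding less_Sup_iff by auto
  have xin: "dist c x < r" and sub: "ball c r \<subseteq> cell P x"
    using a unfolding anchor_def by auto
  define c' where "c' = x + (\<rho>/r) *\<^sub>R (c - x)"
  have r0: "r > 0" using rr assms(2) by simp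
  have d1: "dist c' x = (\<rho>/r) * dist c x"
    unfolding c'_def dist_norm using r0 assms(2) by (simp add: norm_minus_commute)
  have "(\<rho>/r) * dist c x < (\<rho>/r) * r"
    using xin r0 assms(2) by (intro mult_strict_left_mono) auto
  then have x1: "x \<in> ball c' \<rho>" using d1 r0 by (simp add: dist_commute)
  have d2: "dist c c' = (1 - \<rho>/r) * dist c x"
  proof -
    have "c - c' = (1 - \<rho>/r) *\<^sub>R (c - x)" unfolding c'_def by (simp add: algebra_simps)
    then show ?thesis unfolding dist_norm using r0 rr by simp
  qed
  have "(1 - \<rho>/r) * dist c x \<le> (1 - \<rho>/r) * r"
    using xin r0 rr by (intro mult_left_mono) auto
  also have "\<dots> = r - \<rho>" using r0 by (simp add: field_simps)
  finally have d3: "dist c c' \<le> r - \<rho>" using d2 by simp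
  have "ball c' \<rho> \<subseteq> ball c r"
  proof
    fix y assume "y \<in> ball c' \<rho>"
    then have "dist c' y < \<rho>" by simp
    then have "dist c y < r" using dist_triangle[of c y c'] d3 by linarith
    then show "y \<in> ball c r" by simp
  qed
  then show ?thesis using x1 sub by blast
qed


lemma disj_balls:
  fixes a b :: "'a::real_normed_vector"
  assumes "ball a r \<inter> ball b r = {}"
  shows "2 * r \<le> dist a b"
proof (rule ccontr)
  assume "\<not> 2 * r \<le> dist a b"
  then have "midpoint a b \<in> ball a r \<inter> ball b r"
    by (simp add: dist_midpoint dist_commute)
  then show False using assms by blast
qed

lemma three_elems:
  assumes "\<not> (finite S \<and> card S \<le> 2)"
  shows "\<exists>a b c. a \<in> S \<and> b \<in> S \<and> c \<in> S \<and> a \<noteq> b \<and> a \<noteq> c \<and> b \<noteq> c"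
proof (rule ccontr)
  assume H: "\<not> ?thesis"
  show False
  proof (cases "S = {}")
    case True then show ?thesis using assms by simp
  next
    case False
    then obtain a where a: "a \<in> S" by blast
    show ?thesis
    proof (cases "S \<subseteq> {a}")
      case True
      then have "finite S \<and> card S \<le> 2" using card_mono[of "{a}" S] by (simp add: finite_subset)
      then show ?thesis using assms by simp
    next
      case False
      then obtain b where b: "b \<in> S" "b \<noteq> a" by blast
      have "S \<subseteq> {a, b}" using H a b by blast
      have "finite S \<and> card S \<le> 2"
      proof
        show "finite S" using \<open>S \<subseteq> {a, b}\<close> finite_subset by blast
        have "card S \<le> card {a, b}" using \<open>S \<subseteq> {a, b}\<close> by (intro card_mono) auto
        also have "\<dots> \<le> 2" by (simp add: card_insert_if)
        finally show "card S \<le> 2" .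
      qed
      then show ?thesis using assms by simp
    qed
  qed
qed

theorem lemma3:
  fixes P :: "(real ^ 'n) set set" and R :: "(real ^ 'n) set"
  assumes "classifier P R"
    and "infinite_pointwise_coverage P R"
  shows "finite (label_set P R) \<and> card (label_set P R) \<le> 2"
proof (rule ccontr)
  assume nt: "\<not> ?thesis"
  have "\<exists>a b c. a \<in> label_set P R \<and> b \<in> label_set P R \<and> c \<in> label_set P R \<and> a \<noteq> b \<and> a \<noteq> c \<and> b \<noteq> c"
    by (rule three_elems[OF nt])
  then obtain A1 A2 A3 where A: "A1 \<in> label_set P R" "A2 \<in> label_set P R" "A3 \<in> label_set P R"
    "A1 \<noteq> A2" "A1 \<noteq> A3" "A2 \<noteq> A3"
    by blast
  note C = assms(1)[unfolded classifier_def]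
  have cl: "\<Union>P = UNIV" "\<forall>A\<in>P. \<forall>B\<in>P. A \<noteq> B \<longrightarrow> A \<inter> B = {}" "\<forall>A\<in>P. A \<noteq> R \<longrightarrow> A \<noteq> {}"
    using C[THEN conjunct1] C[THEN conjunct2, THEN conjunct1] C[THEN conjunct2, THEN conjunct2, THEN conjunct1]
    by blast+
  have inP: "A1 \<in> P" "A2 \<in> P" "A3 \<in> P" "A1 \<noteq> R" "A2 \<noteq> R" "A3 \<noteq> R"
    using A(1-3) unfolding label_set_def by simp_all
  have ne: "A1 \<noteq> {}" "A2 \<noteq> {}" "A3 \<noteq> {}" using cl(3) inP by simp_all
  obtain x1 where x1: "x1 \<in> A1" using ne(1) by blast
  obtain x2 where x2: "x2 \<in> A2" using ne(2) by blast
  obtain x3 where x3: "x3 \<in> A3" using ne(3) by blast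
  note x = x1 x2 x3
  have fs: "x1 \<in> feature_space P R" "x2 \<in> feature_space P R" "x3 \<in> feature_space P R"
    unfolding feature_space_def using x A(1-3) by (meson UnionI)+
  have cov: "coverage P x1 = \<infinity>" "coverage P x2 = \<infinity>" "coverage P x3 = \<infinity>"
    using fs assms(2) unfolding infinite_pointwise_coverage_def by simp_all
  define D where "D = norm x1 + norm x2 + norm x3"
  have D0: "D \<ge> 0" unfolding D_def by simp
  define \<rho> where "\<rho> = 10 * (D + 1)"
  have r0: "\<rho> > 0" using D0 unfolding \<rho>_def by simp
  obtain c1 where c1: "x1 \<in> ball c1 \<rho>" "ball c1 \<rho> \<subseteq> A1"
    using big_ball[OF cov(1) r0] unfolding cell_eq[OF assms(1) inP(1) x(1)] by blast
  obtain c2 where c2: "x2 \<in> ball c2 \<rho>" "ball c2 \<rho> \<subseteq> A2"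
    using big_ball[OF cov(2) r0] unfolding cell_eq[OF assms(1) inP(2) x(2)] by blast
  obtain c3 where c3: "x3 \<in> ball c3 \<rho>" "ball c3 \<rho> \<subseteq> A3"
    using big_ball[OF cov(3) r0] unfolding cell_eq[OF assms(1) inP(3) x(3)] by blast
  have dj: "A1 \<inter> A2 = {}" "A2 \<inter> A3 = {}" "A1 \<inter> A3 = {}" using cl(2) inP A(4-6) by blast+
  have e12: "2 * \<rho> \<le> dist c1 c2" using dj(1) c1 c2 by (intro disj_balls) blast
  have e23: "2 * \<rho> \<le> dist c2 c3" using dj(2) c2 c3 by (intro disj_balls) blast
  have e13: "2 * \<rho> \<le> dist c1 c3" using dj(3) c1 c3 by (intro disj_balls) blast
  have nb: "norm c \<le> \<rho> + D" if "x \<in> ball c \<rho>" "norm x \<le> D" for c x :: "real ^ 'n"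
  proof -
    have "norm c \<le> dist c x + norm x" using norm_triangle_ineq[of "c - x" x] by (simp add: dist_norm)
    then show ?thesis using that by simp
  qed
  have n1: "norm c1 \<le> \<rho> + D" using nb[OF c1(1)] unfolding D_def by simp
  have n2: "norm c2 \<le> \<rho> + D" using nb[OF c2(1)] unfolding D_def by simp
  have n3: "norm c3 \<le> \<rho> + D" using nb[OF c3(1)] unfolding D_def by simp
  have sq: "(2*\<rho>)^2 \<le> (dist c1 c2)^2" "(2*\<rho>)^2 \<le> (dist c2 c3)^2" "(2*\<rho>)^2 \<le> (dist c1 c3)^2"
    using power_mono[OF e12, of 2] power_mono[OF e23, of 2] power_mono[OF e13, of 2] r0 by auto
  have nq: "(norm c1)^2 \<le> (\<rho>+D)^2" "(norm c2)^2 \<le> (\<rho>+D)^2" "(norm c3)^2 \<le> (\<rho>+D)^2"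
    using power_mono[OF n1, of 2] power_mono[OF n2, of 2] power_mono[OF n3, of 2] by auto
  have "3 * (2*\<rho>)^2 \<le> 9 * (\<rho>+D)^2"
    using sq nq sq3[of c1 c2 c3] by (smt (verit))
  moreover have "(\<rho>+D)^2 \<le> (11/10*\<rho>)^2"
    using D0 unfolding \<rho>_def by (intro power_mono) auto
  moreover have "(11/10*\<rho>)^2 = 121/100 * \<rho>^2" by (simp add: power2_eq_square)
  moreover have "(2*\<rho>)^2 = 4 * \<rho>^2" by (simp add: power2_eq_square)
  moreover have "\<rho>^2 > 0" using r0 by simp
  ultimately show False by linarith
qed

end
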